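(* Let $N=2^L$ ($L\ge1$), channel numbers $r_0,\dots,r_{L-1}\ge1$, an output index $y$, and pairwise distinct covering templates $\mathbf x^{(1)},\dots,\mathbf x^{(M)}\in\mathbb R^s$ be given. Suppose all parameters of the deep ConvNet with ReLU activation, max pooling and weight sharing (representation parameters $\theta_1,\dots,\theta_M\in\Theta$ and the shared linear weights) are drawn from a distribution with a continuous, nowhere-vanishing probability density function. Then with positive probability the resulting score function $h^D_y$ can be realized by a shallow ConvNet with ReLU activation and max pooling (not limited by weight sharing) having a single hidden channel ($Z=1$), i.e. there exist $f_{\tilde\theta_1},\dots,f_{\tilde\theta_M}\in\mathcal F$ and weights for this shallow ConvNet with $\mathcal A(h^S_y)=\mathcal A(h^D_y)$.
   Context: Inputs are $X=(\mathbf x_1,\dots,\mathbf x_N)\in(\mathbb R^s)^N$. Representation functions come from a family $\mathcal F=\{f_\theta:\mathbb R^s\to\mathbb R:\theta\in\Theta\}$, $\Theta$ an open subset of a Euclidean space, assumed throughout to satisfy: (continuity) $f_\theta(\mathbf x)$ continuous in $\theta$ and $\mathbf x$; (non-degeneracy) for any pairwise distinct $\mathbf x^{(1)},\dots,\mathbf x^{(M)}$ there exist $f_{\theta_1},\dots,f_{\theta_M}\in\mathcal F$ with $(f_{\theta_d}(\mathbf x^{(i)}))_{i,d}$ non-singular. ReLU activation with max pooling: $\sigma(z)=\max\{0,z\}$, $P=\max$. Shallow ConvNet ($Z$ hidden channels, unshared): $h^S_y(X)=\sum_{z=1}^Z a^y_z\,P_{i\in[N]}\big(\sigma(\sum_{d=1}^M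 a^{z,i}_d f_{\theta_d}(\mathbf x_i))\big)$, $\mathbf a^{z,i}\in\mathbb R^M$, $\mathbf a^y\in\mathbb R^Z$. Deep ConvNet with weight sharing: with $f_{\theta_d}\in\mathcal F$ and weights $\mathbf a^{0,\gamma}\in\mathbb R^M$ ($\gamma\in[r_0]$), $\mathbf a^{l,\gamma}\in\mathbb R^{r_{l-1}}$ ($l\in[L-1]$, $\gamma\in[r_l]$), $\mathbf a^{L,y}\in\mathbb R^{r_{L-1}}$: $u^0_{j,\gamma}=\sigma(\sum_d a^{0,\gamma}_d f_{\theta_d}(\mathbf x_j))$; for $l=0,\dots,L-1$, $v^l_{j,\gamma}=P(u^l_{2j-1,\gamma},u^l_{2j,\gamma})$ ($j\in[N/2^{l+1}]$), for $l\ge1$, $u^l_{j,\gamma}=\sigma(\sum_\alpha a^{l,\gamma}_\alpha v^{l-1}_{j,\alpha})$ ($j\in[N/2^l]$); $h^D_y(X)=\sum_\alpha a^{L,y}_\alpha v^{L-1}_{1,\alpha}$. Grid tensor: $\mathcal A(h)_{d_1,\dots,d_N}=h(\mathbf x^{(d_1)},\dots,\mathbf x^{(d_N)})$. Templates are covering if score functions are identified whenever their grid tensors coincide. *)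

theory Defs
  imports "HOL-Probability.Probability"
begin

definition relu :: "real \<Rightarrow> real" where
  "relu z = max 0 z"

definition nonsingular_mat :: "nat \<Rightarrow> (nat \<Rightarrow> nat \<Rightarrow> real) \<Rightarrow> bool" where
  "nonsingular_mat m A \<longleftrightarrow> (\<exists>B.
      (\<forall>i<m. \<forall>k<m. (\<Sum>j<m. A i j * B j k) = (if i = k then 1 else 0)) \<and>
      (\<forall>i<m. \<forall>k<m. (\<Sum>j<m. B i j * A j k) = (if i = k then 1 else 0)))"

definition rep_family :: "'p::euclidean_space set \<Rightarrow> ('p \<Rightarrow> 'x::topological_space \<Rightarrow> real) \<Rightarrow> bool" where
  "rep_family \<Theta> f \<longleftrightarrow> open \<Theta> \<and>
     continuous_on (\<Theta> \<times> UNIV) (\<lambda>(\<theta>, x). f \<theta> x) \<and>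
     (\<forall>m (xs :: nat \<Rightarrow> 'x). inj_on xs {..<m} \<longrightarrow>
        (\<exists>th. (\<forall>d<m. th d \<in> \<Theta>) \<and> nonsingular_mat m (\<lambda>i d. f (th d) (xs i))))"

text \<open>Representation parameters
  th d (d < M); shared weights w (l, gamma, alpha):
  layer 0: w (0, gamma, d), gamma < r 0, d < M;
  layer l (1 <= l < L): w (l, gamma, alpha), gamma < r l, alpha < r (l-1);
  output y: w (L, 0, alpha), alpha < r (L-1).
  deep_u l j gamma is u^l_{j+1,gamma+1}; pooling pairs positions 2j, 2j+1.\<close>
fun deep_u :: "('p \<Rightarrow> 'x \<Rightarrow> real) \<Rightarrow> nat \<Rightarrow> (nat \<Rightarrow> nat) \<Rightarrow> (nat \<Rightarrow> 'p)
      \<Rightarrow> (nat \<times> nat \<times> nat \<Rightarrow> real) \<Rightarrow> (nat \<Rightarrow> 'x) \<Rightarrow> nat \<Rightarrow> nat \<Rightarrow> nat \<Rightarrow> real" where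
  "deep_u f M r th w X 0 j \<gamma> = relu (\<Sum>d<M. w (0, \<gamma>, d) * f (th d) (X j))"
| "deep_u f M r th w X (Suc l) j \<gamma> =
     relu (\<Sum>\<alpha><r l. w (Suc l, \<gamma>, \<alpha>) *
              max (deep_u f M r th w X l (2 * j) \<alpha>) (deep_u f M r th w X l (2 * j + 1) \<alpha>))"

definition deep_v :: "('p \<Rightarrow> 'x \<Rightarrow> real) \<Rightarrow> nat \<Rightarrow> (nat \<Rightarrow> nat) \<Rightarrow> (nat \<Rightarrow> 'p)
      \<Rightarrow> (nat \<times> nat \<times> nat \<Rightarrow> real) \<Rightarrow> (nat \<Rightarrow> 'x) \<Rightarrow> nat \<Rightarrow> nat \<Rightarrow> nat \<Rightarrow> real" where
  "deep_v f M r th w X l j \<gamma> =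
     max (deep_u f M r th w X l (2 * j) \<gamma>) (deep_u f M r th w X l (2 * j + 1) \<gamma>)"

definition deep_score :: "('p \<Rightarrow> 'x \<Rightarrow> real) \<Rightarrow> nat \<Rightarrow> nat \<Rightarrow> (nat \<Rightarrow> nat) \<Rightarrow> (nat \<Rightarrow> 'p)
      \<Rightarrow> (nat \<times> nat \<times> nat \<Rightarrow> real) \<Rightarrow> (nat \<Rightarrow> 'x) \<Rightarrow> real" where
  "deep_score f M L r th w X = (\<Sum>\<alpha><r (L - 1). w (L, 0, \<alpha>) * deep_v f M r th w X (L - 1) 0 \<alpha>)"

definition deep_widx :: "nat \<Rightarrow> nat \<Rightarrow> (nat \<Rightarrow> nat) \<Rightarrow> (nat \<times> nat \<times> nat) set" where
  "deep_widx M L r =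
     {(0, \<gamma>, d) | \<gamma> d. \<gamma> < r 0 \<and> d < M}
     \<union> {(l, \<gamma>, \<alpha>) | l \<gamma> \<alpha>. 1 \<le> l \<and> l < L \<and> \<gamma> < r l \<and> \<alpha> < r (l - 1)}
     \<union> {(L, 0, \<alpha>) | \<alpha>. \<alpha> < r (L - 1)}"

text \<open>Shallow ConvNet (no weight sharing) with Z hidden channels:
  a z i d = a^{z,i}_d, ay z = a^y_z.\<close>
definition shallow_score :: "('p \<Rightarrow> 'x \<Rightarrow> real) \<Rightarrow> nat \<Rightarrow> nat \<Rightarrow> nat \<Rightarrow> (nat \<Rightarrow> 'p)
      \<Rightarrow> (nat \<Rightarrow> nat \<Rightarrow> nat \<Rightarrow> real) \<Rightarrow> (nat \<Rightarrow> real) \<Rightarrow> (nat \<Rightarrow> 'x) \<Rightarrow> real" where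
  "shallow_score f M N Z th a ay X =
     (\<Sum>z<Z. ay z * Max ((\<lambda>i. relu (\<Sum>d<M. a z i d * f (th d) (X i))) ` {..<N}))"

definition grid_tensor :: "nat \<Rightarrow> nat \<Rightarrow> (nat \<Rightarrow> 'x) \<Rightarrow> ((nat \<Rightarrow> 'x) \<Rightarrow> real) \<Rightarrow> (nat \<Rightarrow> nat) \<Rightarrow> real" where
  "grid_tensor M N xs h = restrict (\<lambda>dd. h (\<lambda>i. xs (dd i))) {dd. \<forall>i<N. dd i < M}"

definition deep_param_measure :: "nat \<Rightarrow> nat \<Rightarrow> (nat \<Rightarrow> nat)
      \<Rightarrow> ((nat \<Rightarrow> 'p::euclidean_space) \<times> (nat \<times> nat \<times> nat \<Rightarrow> real)) measure" where
  "deep_param_measure M L r =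
     (PiM {..<M} (\<lambda>_. lborel)) \<Otimes>\<^sub>M (PiM (deep_widx M L r) (\<lambda>_. lborel))"

definition deep_param_domain :: "'p set \<Rightarrow> nat \<Rightarrow> nat \<Rightarrow> (nat \<Rightarrow> nat)
      \<Rightarrow> ((nat \<Rightarrow> 'p) \<times> (nat \<times> nat \<times> nat \<Rightarrow> real)) set" where
  "deep_param_domain \<Theta> M L r =
     (PiE {..<M} (\<lambda>_. \<Theta>)) \<times> (PiE (deep_widx M L r) (\<lambda>_. UNIV))"

end

theory Submission
  imports Defs
begin

lemma deep_zero:
  assumes neg: "\<forall>j \<gamma>. j < 2^L \<longrightarrow> \<gamma> < r 0 \<longrightarrow> (\<Sum>d<M. w (0,\<gamma>,d) * f (th d) (X j)) \<le> 0"
  shows "(j+1)*2^l \<le> (2::nat)^L \<Longrightarrow> (l = 0 \<longrightarrow> \<gamma> < r 0) \<Longrightarrow> deep_u f M r th w X l j \<gamma> = 0"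
proof (induction l arbitrary: j \<gamma>)
  case 0
  then show ?case using neg by (auto simp: relu_def)
next
  case (Suc l)
  have "\<forall>\<alpha><r l. deep_u f M r th w X l (2*j) \<alpha> = 0 \<and> deep_u f M r th w X l (2*j+1) \<alpha> = 0"
  proof (intro allI impI conjI)
    fix \<alpha> assume "\<alpha> < r l"
    have a: "(2*j+1+1)*2^l \<le> (2::nat)^L" using Suc.prems(1) by (simp add: algebra_simps)
    hence b: "(2*j+1)*2^l \<le> (2::nat)^L" by (meson add_le_mono1 le_add1 mult_le_mono1 order_trans)
    show "deep_u f M r th w X l (2*j) \<alpha> = 0" using Suc.IH[of "2*j" \<alpha>] b \<open>\<alpha> < r l\<close> by auto
    show "deep_u f M r th w X l (2*j+1) \<alpha> = 0" using Suc.IH[of "2*j+1" \<alpha>] a \<open>\<alpha> < r l\<close> by auto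
  qed
  then show ?case by (simp add: relu_def)
qed

lemma deep_score_zero:
  assumes neg: "\<forall>j \<gamma>. j < 2^L \<longrightarrow> \<gamma> < r 0 \<longrightarrow> (\<Sum>d<M. w (0,\<gamma>,d) * f (th d) (X j)) \<le> 0"
    and L: "L \<ge> 1"
  shows "deep_score f M L r th w X = 0"
proof -
  have "\<forall>\<alpha><r (L-1). deep_v f M r th w X (L-1) 0 \<alpha> = 0"
  proof (intro allI impI)
    fix \<alpha> assume "\<alpha> < r (L-1)"
    have e: "(2::nat) * 2^(L-1) = 2^L" using L by (metis Suc_diff_le diff_Suc_1 power_Suc)
    show "deep_v f M r th w X (L-1) 0 \<alpha> = 0"
    proof -
      have "deep_u f M r th w X (L-1) 0 \<alpha> = 0"
        by (rule deep_zero[where L=L and r=r and M=M and w=w and f=f and th=th and X=X, OF neg]) (use e \<open>\<alpha> < r (L-1)\<close> in auto)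
      moreover have "deep_u f M r th w X (L-1) 1 \<alpha> = 0"
        by (rule deep_zero[where L=L and r=r and M=M and w=w and f=f and th=th and X=X, OF neg]) (use e \<open>\<alpha> < r (L-1)\<close> in auto)
      ultimately show ?thesis by (simp add: deep_v_def)
    qed
  qed
  then show ?thesis unfolding deep_score_def by simp
qed

lemma widx_finite: "finite (deep_widx M L r)"
proof -
  define B where "B = (\<Sum>l\<le>L. r l) + M + 1"
  have rl: "l \<le> L \<Longrightarrow> r l < B" for l
    unfolding B_def using member_le_sum[of l "{..L}" r] by auto
  have "deep_widx M L r \<subseteq> {..L} \<times> {..<B} \<times> {..<B}"
  proof
    fix x assume "x \<in> deep_widx M L r"
    then show "x \<in> {..L} \<times> {..<B} \<times> {..<B}"
      unfolding deep_widx_def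
    proof (elim UnE CollectE exE conjE)
      fix l \<gamma> \<alpha> assume "x = (l,\<gamma>,\<alpha>)" "1 \<le> l" "l < L" "\<gamma> < r l" "\<alpha> < r (l - 1)"
      moreover have "r (l-1) < B" using rl[of "l-1"] \<open>l<L\<close> by simp
      ultimately show ?thesis using rl[of l] by auto
    qed (use rl[of 0] rl[of L] rl[of "L-1"] in \<open>auto simp: B_def\<close>)
  qed
  then show ?thesis by (rule finite_subset) auto
qed

lemma est_term:
  fixes a c f F e h :: real
  assumes "\<bar>a - c\<bar> < h" "\<bar>f - F\<bar> < e" "e \<le> 1" "h > 0"
  shows "a * f \<le> c * F + (h * (\<bar>F\<bar> + 1) + \<bar>c\<bar> * e)"
proof -
  have 0: "a * f - c * F = (a - c) * f + c * (f - F)" by (simp add: algebra_simps)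
  have 1: "(a - c) * f \<le> \<bar>a - c\<bar> * \<bar>f\<bar>" by (metis abs_ge_self abs_mult)
  have 2: "\<bar>a - c\<bar> * \<bar>f\<bar> \<le> h * (\<bar>F\<bar> + 1)"
    using assms by (intro mult_mono) auto
  have 3: "c * (f - F) \<le> \<bar>c\<bar> * \<bar>f - F\<bar>" by (metis abs_ge_self abs_mult)
  have 4: "\<bar>c\<bar> * \<bar>f - F\<bar> \<le> \<bar>c\<bar> * e" using assms(2) by (intro mult_left_mono) auto
  show ?thesis using 0 1 2 3 4 by linarith
qed

lemma ballpos: "\<rho> > 0 \<Longrightarrow> emeasure lborel (ball (x::'a::euclidean_space) \<rho>) \<noteq> 0"
  by (simp add: emeasure_ball) (metis of_nat_0_le_iff unit_ball_vol_pos order_less_irrefl)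

theorem claim16:
  fixes \<Theta> :: "'p::euclidean_space set"
    and f :: "'p \<Rightarrow> real^'s \<Rightarrow> real"
    and L M :: nat
    and r :: "nat \<Rightarrow> nat"
    and xs :: "nat \<Rightarrow> real^'s"
    and g :: "(nat \<Rightarrow> 'p) \<times> (nat \<times> nat \<times> nat \<Rightarrow> real) \<Rightarrow> real"
    and P :: "((nat \<Rightarrow> 'p) \<times> (nat \<times> nat \<times> nat \<Rightarrow> real)) measure"
  assumes fam: "rep_family \<Theta> f"
    and L: "L \<ge> 1"
    and r: "\<forall>l<L. r l \<ge> 1"
    and distinct: "inj_on xs {..<M}"
    and P_def: "P = density (deep_param_measure M L r) (\<lambda>q. ennreal (g q))"
    and prob: "prob_space P"
    and g_meas: "g \<in> borel_measurable (deep_param_measure M L r)"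
    and g_nonneg: "\<forall>q. g q \<ge> 0"
    and g_cont: "continuous_on (deep_param_domain \<Theta> M L r) g"
    and g_pos: "\<forall>q\<in>deep_param_domain \<Theta> M L r. g q > 0"
    and g_out: "\<forall>q\<in>space (deep_param_measure M L r) - deep_param_domain \<Theta> M L r. g q = 0"
  shows "\<exists>E\<in>sets P. emeasure P E > 0 \<and>
           E \<subseteq> {(th, w) \<in> deep_param_domain \<Theta> M L r.
                  \<exists>th' a ay. (\<forall>d<M. th' d \<in> \<Theta>) \<and>
                    grid_tensor M (2 ^ L) xs (shallow_score f M (2 ^ L) 1 th' a ay)
                    = grid_tensor M (2 ^ L) xs (deep_score f M L r th w)}"
proof -
  define W where "W = deep_widx M L r"
  define Q where "Q = (deep_param_measure M L r :: ((nat \<Rightarrow> 'p) \<times> (nat \<times> nat \<times> nat \<Rightarrow> real)) measure)"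
  have openT: "open \<Theta>" and contf: "continuous_on (\<Theta> \<times> UNIV) (\<lambda>(\<theta>, x). f \<theta> x)"
    using fam unfolding rep_family_def by auto
  obtain th0 where th0: "\<forall>d<M. th0 d \<in> \<Theta>" and ns: "nonsingular_mat M (\<lambda>i d. f (th0 d) (xs i))"
    using fam distinct unfolding rep_family_def by blast
  define F where "F d j = f (th0 d) (xs j)" for d j
  obtain B where B: "\<forall>i<M. \<forall>k<M. (\<Sum>j<M. F j i * B j k) = (if i = k then 1 else 0)"
    using ns unfolding nonsingular_mat_def F_def by blast
  define c where "c d = - (\<Sum>k<M. B d k)" for d
  have cF: "(\<Sum>d<M. c d * F d j) = -1" if "j < M" for j
  proof -
    have "(\<Sum>d<M. c d * F d j) = (\<Sum>d<M. - (\<Sum>k<M. B d k * F d j))"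
      unfolding c_def by (simp add: sum_distrib_right)
    also have "\<dots> = - (\<Sum>d<M. \<Sum>k<M. B d k * F d j)" by (simp add: sum_negf)
    also have "\<dots> = - (\<Sum>k<M. \<Sum>d<M. B d k * F d j)" by (rule arg_cong[where f=uminus], rule sum.swap)
    also have "\<dots> = - (\<Sum>k<M. (if j = k then 1 else 0))" using B that by (simp add: mult.commute)
    also have "\<dots> = -1" using that by simp
    finally show ?thesis .
  qed
  define C where "C = (\<Sum>d<M. \<bar>c d\<bar>)"
  define S where "S = (\<Sum>d<M. \<Sum>j<M. \<bar>F d j\<bar> + 1)"
  define \<epsilon> where "\<epsilon> = 1 / (2 * (1 + C))"
  define \<eta> where "\<eta> = 1 / (2 * (1 + S))"
  have C0: "C \<ge> 0" unfolding C_def by (simp add: sum_nonneg)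
  have S0: "S \<ge> 0" unfolding S_def by (simp add: sum_nonneg)
  have eps: "\<epsilon> > 0" "\<epsilon> \<le> 1" "C * \<epsilon> < 1/2" using C0 unfolding \<epsilon>_def by (auto simp: field_simps)
  have eta: "\<eta> > 0" "S * \<eta> < 1/2" using S0 unfolding \<eta>_def by (auto simp: field_simps)
  have "\<exists>\<delta>>0. \<forall>\<theta>. dist \<theta> (th0 d) < \<delta> \<longrightarrow> \<theta> \<in> \<Theta> \<and> (\<forall>j\<in>{..<M}. \<bar>f \<theta> (xs j) - F d j\<bar> < \<epsilon>)"
    if d: "d < M" for d
  proof -
    have "eventually (\<lambda>\<theta>. \<theta> \<in> \<Theta>) (nhds (th0 d))"
      using openT th0 d by (simp add: eventually_nhds_in_open)
    moreover have "eventually (\<lambda>\<theta>. \<forall>j\<in>{..<M}. \<bar>f \<theta> (xs j) - F d j\<bar> < \<epsilon>) (nhds (th0 d))"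
    proof (rule eventually_ball_finite, simp, intro ballI)
      fix j assume "j \<in> {..<M}"
      have "continuous_on \<Theta> (\<lambda>\<theta>. f \<theta> (xs j))"
      proof -
        have "continuous_on \<Theta> ((\<lambda>(\<theta>, x). f \<theta> x) \<circ> (\<lambda>\<theta>. (\<theta>, xs j)))"
          by (rule continuous_on_compose) (auto intro!: continuous_intros intro: continuous_on_subset[OF contf])
        then show ?thesis by (simp add: o_def)
      qed
      then have "isCont (\<lambda>\<theta>. f \<theta> (xs j)) (th0 d)"
        using openT th0 d continuous_on_eq_continuous_at by blast
      then have "((\<lambda>\<theta>. f \<theta> (xs j)) \<longlongrightarrow> F d j) (nhds (th0 d))"
        unfolding F_def isCont_def by (rule tendsto_at_iff_tendsto_nhds[THEN iffD1])
      then show "eventually (\<lambda>\<theta>. \<bar>f \<theta> (xs j) - F d j\<bar> < \<epsilon>) (nhds (th0 d))"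
        using eps(1) by (auto dest!: tendstoD[of _ _ _ \<epsilon>] simp: dist_real_def)
    qed
    ultimately have "eventually (\<lambda>\<theta>. \<theta> \<in> \<Theta> \<and> (\<forall>j\<in>{..<M}. \<bar>f \<theta> (xs j) - F d j\<bar> < \<epsilon>)) (nhds (th0 d))"
      by (rule eventually_conj)
    then show ?thesis unfolding eventually_nhds_metric by blast
  qed
  then obtain \<delta> where \<delta>: "\<And>d. d < M \<Longrightarrow> \<delta> d > 0 \<and> (\<forall>\<theta>. dist \<theta> (th0 d) < \<delta> d \<longrightarrow> \<theta> \<in> \<Theta> \<and> (\<forall>j\<in>{..<M}. \<bar>f \<theta> (xs j) - F d j\<bar> < \<epsilon>))"
    by metis
  define w0 where "w0 i = (case i of (l, \<gamma>, d) \<Rightarrow> if l = 0 then c d else 0)" for i :: "nat \<times> nat \<times> nat"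
  define E where "E = (PiE {..<M} (\<lambda>d. ball (th0 d) (\<delta> d))) \<times> (PiE W (\<lambda>i. ball (w0 i) \<eta>))"
  have key: "(\<Sum>d<M. w (0,\<gamma>,d) * f (th d) (xs j)) < 0"
    if q: "(th, w) \<in> E" and \<gamma>: "\<gamma> < r 0" and j: "j < M" for th w \<gamma> j
  proof -
    have t: "\<bar>w (0,\<gamma>,d) * f (th d) (xs j)\<bar> \<ge> 0" for d by simp
    have "(\<Sum>d<M. w (0,\<gamma>,d) * f (th d) (xs j)) \<le> (\<Sum>d<M. c d * F d j + (\<eta> * (\<bar>F d j\<bar> + 1) + \<bar>c d\<bar> * \<epsilon>))"
    proof (rule sum_mono)
      fix d assume d: "d \<in> {..<M}"
      have "th d \<in> ball (th0 d) (\<delta> d)" using q d unfolding E_def by auto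
      then have f1: "\<bar>f (th d) (xs j) - F d j\<bar> < \<epsilon>" using \<delta>[of d] d j by (auto simp: dist_commute)
      have "(0,\<gamma>,d) \<in> W" unfolding W_def deep_widx_def using \<gamma> d by auto
      then have "w (0,\<gamma>,d) \<in> ball (w0 (0,\<gamma>,d)) \<eta>" using q unfolding E_def by (auto simp del: mem_ball)
      then have "w (0,\<gamma>,d) \<in> ball (c d) \<eta>" unfolding w0_def by simp
      then have w1: "\<bar>w (0,\<gamma>,d) - c d\<bar> < \<eta>" by (simp add: dist_real_def abs_minus_commute)
      show "w (0,\<gamma>,d) * f (th d) (xs j) \<le> c d * F d j + (\<eta> * (\<bar>F d j\<bar> + 1) + \<bar>c d\<bar> * \<epsilon>)"
        by (rule est_term[OF w1 f1 eps(2) eta(1)])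
    qed
    also have "\<dots> = -1 + \<eta> * (\<Sum>d<M. \<bar>F d j\<bar> + 1) + C * \<epsilon>"
      using cF[OF j] unfolding C_def by (simp add: sum.distrib sum_distrib_left sum_distrib_right algebra_simps)
    finally have fin0: "(\<Sum>d<M. w (0,\<gamma>,d) * f (th d) (xs j)) \<le> -1 + \<eta> * (\<Sum>d<M. \<bar>F d j\<bar> + 1) + C * \<epsilon>" .
    have Xle: "(\<Sum>d<M. \<bar>F d j\<bar> + 1) \<le> S"
      unfolding S_def
    proof (rule sum_mono)
      fix d show "\<bar>F d j\<bar> + 1 \<le> (\<Sum>j<M. \<bar>F d j\<bar> + 1)"
        using member_le_sum[of j "{..<M}" "\<lambda>j. \<bar>F d j\<bar> + 1"] j by auto
    qed
    have "\<eta> * (\<Sum>d<M. \<bar>F d j\<bar> + 1) \<le> \<eta> * S" using Xle eta(1) by (intro mult_left_mono) auto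
    moreover have "\<eta> * S < 1/2" using eta(2) by (simp add: mult.commute)
    ultimately show ?thesis using fin0 eps(3) by linarith
  qed
  have Wfin: "finite W" unfolding W_def by (rule widx_finite)
  have \<delta>pos: "d < M \<Longrightarrow> \<delta> d > 0" for d using \<delta> by blast
  have A1: "PiE {..<M} (\<lambda>d. ball (th0 d) (\<delta> d)) \<in> sets (PiM {..<M} (\<lambda>_. lborel :: 'p measure))"
    by (rule sets_PiM_I_finite) auto
  have A2: "PiE W (\<lambda>i. ball (w0 i) \<eta>) \<in> sets (PiM W (\<lambda>_. lborel :: real measure))"
    using Wfin by (intro sets_PiM_I_finite) auto
  have Esets: "E \<in> sets Q"
    unfolding Q_def deep_param_measure_def E_def W_def[symmetric] using A1 A2 by (rule pair_measureI)
  interpret p1: product_sigma_finite "(\<lambda>_. lborel) :: nat \<Rightarrow> 'p measure" by standard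
  interpret p2: product_sigma_finite "(\<lambda>_. lborel) :: nat \<times> nat \<times> nat \<Rightarrow> real measure" by standard
  have sf: "sigma_finite_measure (PiM W (\<lambda>_. lborel :: real measure))"
    by (rule p2.sigma_finite[OF Wfin])
  have m1: "emeasure (PiM {..<M} (\<lambda>_. lborel :: 'p measure)) (PiE {..<M} (\<lambda>d. ball (th0 d) (\<delta> d)))
      = (\<Prod>d<M. emeasure lborel (ball (th0 d) (\<delta> d)))"
    by (rule p1.emeasure_PiM) auto
  have m2: "emeasure (PiM W (\<lambda>_. lborel :: real measure)) (PiE W (\<lambda>i. ball (w0 i) \<eta>))
      = (\<Prod>i\<in>W. emeasure lborel (ball (w0 i) \<eta>))"
    by (rule p2.emeasure_PiM) (use Wfin in auto)
  have QE: "emeasure Q E \<noteq> 0"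
  proof -
    have "emeasure Q E = emeasure (PiM {..<M} (\<lambda>_. lborel :: 'p measure)) (PiE {..<M} (\<lambda>d. ball (th0 d) (\<delta> d)))
        * emeasure (PiM W (\<lambda>_. lborel :: real measure)) (PiE W (\<lambda>i. ball (w0 i) \<eta>))"
      unfolding Q_def deep_param_measure_def E_def W_def[symmetric]
      by (rule sigma_finite_measure.emeasure_pair_measure_Times[OF sf A1 A2])
    moreover have "(\<Prod>d<M. emeasure lborel (ball (th0 d) (\<delta> d))) \<noteq> 0"
      by (simp add: ballpos \<delta>pos)
    moreover have "(\<Prod>i\<in>W. emeasure lborel (ball (w0 i) \<eta>)) \<noteq> 0"
      by (simp add: ballpos eta(1))
    ultimately show ?thesis using m1 m2 by simp
  qed
  have dom: "E \<subseteq> deep_param_domain \<Theta> M L r"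
  proof
    fix q assume "q \<in> E"
    then obtain th w where q: "q = (th, w)" "th \<in> PiE {..<M} (\<lambda>d. ball (th0 d) (\<delta> d))" "w \<in> PiE W (\<lambda>i. ball (w0 i) \<eta>)"
      unfolding E_def by auto
    have "th \<in> PiE {..<M} (\<lambda>_. \<Theta>)" using q(2) \<delta> by (auto simp: PiE_iff dist_commute)
    moreover have "w \<in> PiE W (\<lambda>_. UNIV)" using q(3) by (auto simp: PiE_iff)
    ultimately show "q \<in> deep_param_domain \<Theta> M L r" unfolding deep_param_domain_def q(1) W_def by auto
  qed
  have good: "E \<subseteq> {(th, w) \<in> deep_param_domain \<Theta> M L r.
                  \<exists>th' a ay. (\<forall>d<M. th' d \<in> \<Theta>) \<and>
                    grid_tensor M (2 ^ L) xs (shallow_score f M (2 ^ L) 1 th' a ay)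
                    = grid_tensor M (2 ^ L) xs (deep_score f M L r th w)}"
  proof (clarify)
    fix th w assume q: "(th, w) \<in> E"
    have z: "deep_score f M L r th w (\<lambda>i. xs (dd i)) = 0" if dd: "\<forall>i<2^L. dd i < M" for dd
    proof (rule deep_score_zero[OF _ L])
      show "\<forall>j \<gamma>. j < 2^L \<longrightarrow> \<gamma> < r 0 \<longrightarrow> (\<Sum>d<M. w (0,\<gamma>,d) * f (th d) (xs (dd j))) \<le> 0"
        using key[OF q] dd by (auto intro: less_imp_le)
    qed
    have "grid_tensor M (2 ^ L) xs (shallow_score f M (2 ^ L) 1 th0 (\<lambda>_ _ _. 0) (\<lambda>_. 0))
        = grid_tensor M (2 ^ L) xs (deep_score f M L r th w)"
      unfolding grid_tensor_def by (rule restrict_ext) (simp add: z shallow_score_def)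
    then show "(th, w) \<in> deep_param_domain \<Theta> M L r \<and> (\<exists>th' a ay. (\<forall>d<M. th' d \<in> \<Theta>) \<and>
                    grid_tensor M (2 ^ L) xs (shallow_score f M (2 ^ L) 1 th' a ay)
                    = grid_tensor M (2 ^ L) xs (deep_score f M L r th w))"
      using dom q th0 by blast
  qed
  have PE: "emeasure P E > 0"
  proof (rule ccontr)
    assume "\<not> emeasure P E > 0"
    then have "emeasure P E = 0" by (simp add: not_gr_zero)
    moreover have "emeasure P E = (\<integral>\<^sup>+ x. ennreal (g x) * indicator E x \<partial>Q)"
      unfolding P_def Q_def[symmetric] using g_meas Esets unfolding Q_def
      by (intro emeasure_density) auto
    ultimately have "AE x in Q. ennreal (g x) * indicator E x = 0"
      using Esets g_meas unfolding Q_def by (subst nn_integral_0_iff_AE[symmetric]) auto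
    then have "AE x in Q. x \<notin> E"
      by eventually_elim (use g_pos dom in \<open>fastforce simp: indicator_def not_le split: if_splits\<close>)
    then have "emeasure Q E = 0"
      using Esets by (subst AE_iff_measurable[symmetric, where P="\<lambda>x. x \<notin> E"]) (auto dest: sets.sets_into_space)
    then show False using QE by simp
  qed
  show ?thesis
    using Esets PE good P_def Q_def by auto
qed

end
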